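(* Let $X\sim \mathrm{Po}(\lambda)$ with $P(X=k)=e^{-\lambda}\lambda^k/k!$ and $Y\sim\mathrm{Ge}(p)$ with $P(Y=k)=q^kp$, $k\in\mathbb{Z}_+$, where $p\in(0,1]$ and $q=1-p$, and assume $X$ and $Y$ are independent. Then a Stein operator for $X+Y$ is $$\bar{\mathscr{A}}_{X+Y}h(j)=\Big(\lambda+\frac{q}{p}\Big)h(j+1)-j\,h(j)+\sum_{k=0}^{\infty}\sum_{l=1}^{k}q^{k+1}\,\Delta h(j+l),\qquad j\in\mathbb{Z}_+,$$ that is, $\mathbb{E}[\bar{\mathscr{A}}_{X+Y}h(X+Y)]=0$ for all $h\in H_{X+Y}$.
   Context: $\Delta h(j)=h(j+1)-h(j)$ is the forward difference. $H$ denotes the set of bounded functions $h:\mathbb{Z}_+\to\mathbb{R}$, and for a random variable $\bar X$, $H_{\bar X}=\{h\in H: h(0)=0 \text{ and } h(j)=0 \text{ for } j\notin \mathrm{Supp}(\bar X)\}$. A Stein operator for $\bar X$ is an operator $\mathscr{A}_{\bar X}$ with $\mathbb{E}[\mathscr{A}_{\bar X}h(\bar X)]=0$ for the relevant class of $h$. *)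

theory Defs
  imports "HOL-Probability.Probability"
begin

definition fdiff :: "(nat \<Rightarrow> real) \<Rightarrow> nat \<Rightarrow> real" where
  "fdiff h j = h (j + 1) - h j"

definition bounded_fun :: "(nat \<Rightarrow> real) \<Rightarrow> bool" where
  "bounded_fun h \<longleftrightarrow> (\<exists>B. \<forall>j. \<bar>h j\<bar> \<le> B)"

definition H_of :: "nat pmf \<Rightarrow> (nat \<Rightarrow> real) set" where
  "H_of D = {h. bounded_fun h \<and> h 0 = 0 \<and> (\<forall>j. j \<notin> set_pmf D \<longrightarrow> h j = 0)}"

definition law_PoGe :: "real \<Rightarrow> real \<Rightarrow> nat pmf" where
  "law_PoGe lam p = map_pmf (\<lambda>(x, y). x + y) (pair_pmf (poisson_pmf lam) (geometric_pmf p))"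

definition stein_PoGe :: "real \<Rightarrow> real \<Rightarrow> (nat \<Rightarrow> real) \<Rightarrow> nat \<Rightarrow> real" where
  "stein_PoGe lam p h j =
     (lam + (1 - p) / p) * h (j + 1) - real j * h j
     + (\<Sum>k. \<Sum>l = 1..k. (1 - p) ^ (k + 1) * fdiff h (j + l))"

end

theory Submission
  imports Defs
begin

lemma pair_pmf_eq_pair_measure:
  fixes A B :: "nat pmf"
  shows "measure_pmf (pair_pmf A B) = measure_pmf A \<Otimes>\<^sub>M measure_pmf B"
proof (rule pair_measure_eqI[symmetric])
  show "sigma_finite_measure (measure_pmf A)" "sigma_finite_measure (measure_pmf B)"
    by (simp_all add: prob_space_imp_sigma_finite measure_pmf.prob_space_axioms)
  have "sets (measure_pmf A \<Otimes>\<^sub>M measure_pmf B) = sets (count_space (UNIV::nat set) \<Otimes>\<^sub>M count_space (UNIV::nat set))"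
    by (intro sets_pair_measure_cong) auto
  also have "\<dots> = UNIV" by (subst pair_measure_countable) auto
  finally show "sets (measure_pmf A \<Otimes>\<^sub>M measure_pmf B) = sets (measure_pmf (pair_pmf A B))" by simp
  fix X Y :: "nat set"
  show "emeasure (measure_pmf A) X * emeasure (measure_pmf B) Y = emeasure (measure_pmf (pair_pmf A B)) (X \<times> Y)"
    by (simp add: measure_pmf.emeasure_eq_measure measure_pmf_prob_product ennreal_mult)
qed

lemma pmf_integral_sums:
  fixes M :: "nat pmf" and g :: "nat \<Rightarrow> real"
  assumes "integrable M g"
  shows "(\<lambda>n. pmf M n * g n) sums measure_pmf.expectation M g"
proof -
  have "integrable (count_space UNIV) (\<lambda>n. pmf M n * g n)"
    using assms unfolding measure_pmf_eq_density by (subst (asm) integrable_density) auto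
  from sums_integral_count_space_nat[OF this] show ?thesis
    unfolding measure_pmf_eq_density by (subst integral_density) auto
qed

lemma pmf_integrable_summable:
  fixes M :: "nat pmf" and g :: "nat \<Rightarrow> real"
  assumes "summable (\<lambda>n. \<bar>pmf M n * g n\<bar>)"
  shows "integrable M g"
  using assms unfolding measure_pmf_eq_density
  by (subst integrable_density) (auto simp: integrable_count_space_nat_iff)


lemma bounded_integrable:
  fixes M :: "'a pmf" and g :: "'a \<Rightarrow> real"
  assumes "\<And>j. \<bar>g j\<bar> \<le> C"
  shows "integrable M g"
  by (rule measure_pmf.integrable_const_bound[where B=C]) (use assms in auto)

lemma lin_integrable:
  fixes M :: "nat pmf" and g :: "nat \<Rightarrow> real"
  assumes "integrable M real" "\<And>j. \<bar>g j\<bar> \<le> C * real j + D"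
  shows "integrable M g"
proof (rule Bochner_Integration.integrable_bound)
  show "integrable M (\<lambda>j. C * real j + D)"
    using assms(1) by (intro Bochner_Integration.integrable_add integrable_mult_right) auto
  show "g \<in> borel_measurable M" by simp
  show "AE x in M. norm (g x) \<le> norm (C * real x + D)"
    using assms(2) by (auto intro!: AE_I2 order_trans[OF _ abs_ge_self])
qed

lemma poisson_stein:
  fixes f :: "nat \<Rightarrow> real"
  assumes lam: "0 < lam" and fb: "\<And>j. \<bar>f j\<bar> \<le> B"
  shows "integrable (poisson_pmf lam) (\<lambda>x. real x * f x)"
    and "measure_pmf.expectation (poisson_pmf lam) (\<lambda>x. real x * f x)
         = lam * measure_pmf.expectation (poisson_pmf lam) (\<lambda>x. f (Suc x))"
proof -
  let ?P = "pmf (poisson_pmf lam)"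
  let ?E = "measure_pmf.expectation (poisson_pmf lam) (\<lambda>x. f (Suc x))"
  have i1: "integrable (poisson_pmf lam) (\<lambda>x. f (Suc x))"
    by (rule bounded_integrable[where C=B]) (use fb in auto)
  have i2: "integrable (poisson_pmf lam) (\<lambda>x. \<bar>f (Suc x)\<bar>)"
    by (rule bounded_integrable[where C=B]) (use fb in auto)
  have key: "?P (Suc n) * (real (Suc n) * f (Suc n)) = lam * (?P n * f (Suc n))" for n
  proof -
    have "?P (Suc n) * real (Suc n) = lam * ?P n"
      using lam by (simp add: fact_Suc del: of_nat_Suc)
    thus ?thesis by (metis mult.assoc mult.left_commute)
  qed
  have s1: "(\<lambda>n. ?P n * f (Suc n)) sums ?E" by (rule pmf_integral_sums[OF i1])
  have "(\<lambda>n. ?P n * \<bar>f (Suc n)\<bar>) sums measure_pmf.expectation (poisson_pmf lam) (\<lambda>x. \<bar>f (Suc x)\<bar>)"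
    by (rule pmf_integral_sums[OF i2])
  hence "summable (\<lambda>n. lam * (?P n * \<bar>f (Suc n)\<bar>))" by (intro summable_mult) (auto simp: sums_iff)
  hence "summable (\<lambda>n. \<bar>?P (Suc n) * (real (Suc n) * f (Suc n))\<bar>)"
    unfolding key using lam by (simp add: abs_mult)
  hence "summable (\<lambda>n. \<bar>?P n * (real n * f n)\<bar>)"
    by (subst summable_Suc_iff[symmetric])
  thus int: "integrable (poisson_pmf lam) (\<lambda>x. real x * f x)"
    by (rule pmf_integrable_summable)
  have "(\<lambda>n. lam * (?P n * f (Suc n))) sums (lam * ?E)" by (rule sums_mult[OF s1])
  hence "(\<lambda>n. ?P (Suc n) * (real (Suc n) * f (Suc n))) sums (lam * ?E)" unfolding key .
  hence "(\<lambda>n. ?P n * (real n * f n)) sums (lam * ?E + ?P 0 * (real 0 * f 0))"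
    by (subst (asm) sums_Suc_iff)
  hence "(\<lambda>n. ?P n * (real n * f n)) sums (lam * ?E)" by simp
  moreover have "(\<lambda>n. ?P n * (real n * f n)) sums measure_pmf.expectation (poisson_pmf lam) (\<lambda>x. real x * f x)"
    by (rule pmf_integral_sums[OF int])
  ultimately show "measure_pmf.expectation (poisson_pmf lam) (\<lambda>x. real x * f x) = lam * ?E"
    using sums_unique2 by blast
qed


lemma abs_mult_bound: fixes c x B :: real
  shows "0 \<le> c \<Longrightarrow> \<bar>x\<bar> \<le> B \<Longrightarrow> \<bar>c * x\<bar> \<le> B * c"
  by (metis abs_mult abs_of_nonneg mult.commute mult_left_mono)

definition Rq :: "real \<Rightarrow> (nat \<Rightarrow> real) \<Rightarrow> nat \<Rightarrow> real" where
  "Rq q f y = (\<Sum>m. q ^ (m + 1) * f (y + m + 1))"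

lemma geom_q_sums:
  fixes q :: real assumes "0 \<le> q" "q < 1"
  shows "(\<lambda>m. q ^ (m + 1)) sums (q / (1 - q))"
proof -
  have "(\<lambda>m. q * q ^ m) sums (q * (1 / (1 - q)))"
    by (intro sums_mult geometric_sums) (use assms in auto)
  thus ?thesis by simp
qed

lemma Rq_summable:
  fixes q :: real assumes "0 \<le> q" "q < 1" "\<And>j. \<bar>f j\<bar> \<le> B"
  shows "summable (\<lambda>m. q ^ (m + 1) * f (y + m + 1))"
proof (rule summable_comparison_test)
  show "summable (\<lambda>m. B * q ^ (m + 1))"
    using geom_q_sums[OF assms(1,2)] by (intro summable_mult) (auto simp: sums_iff)
  show "\<exists>N. \<forall>n\<ge>N. norm (q ^ (n + 1) * f (y + n + 1)) \<le> B * q ^ (n + 1)"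
    using assms by (auto intro!: abs_mult_bound)
qed

lemma Rq_bound:
  fixes q :: real assumes "0 \<le> q" "q < 1" "\<And>j. \<bar>f j\<bar> \<le> B"
  shows "\<bar>Rq q f y\<bar> \<le> B * (q / (1 - q))"
proof -
  have s: "summable (\<lambda>m. q ^ (m + 1) * f (y + m + 1))" by (rule Rq_summable[OF assms])
  have g: "(\<lambda>m. B * q ^ (m + 1)) sums (B * (q / (1 - q)))"
    by (intro sums_mult geom_q_sums) (use assms in auto)
  have gm: "(\<lambda>m. - (B * q ^ (m + 1))) sums (- (B * (q / (1 - q))))"
    by (intro sums_minus g)
  have le: "\<bar>q ^ (m + 1) * f (y + m + 1)\<bar> \<le> B * q ^ (m + 1)" for m
    using assms by (intro abs_mult_bound) auto
  have "Rq q f y \<le> B * (q / (1 - q))"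
    unfolding Rq_def using le s g by (intro sums_le[OF _ summable_sums[OF s]]) (auto simp: abs_le_iff)
  moreover have "- (B * (q / (1 - q))) \<le> Rq q f y"
    unfolding Rq_def using le s gm by (intro sums_le[OF _ gm summable_sums[OF s]]) (smt (verit))
  ultimately show ?thesis by auto
qed

lemma Rq_rec:
  fixes q :: real assumes "0 \<le> q" "q < 1" "\<And>j. \<bar>f j\<bar> \<le> B"
  shows "Rq q f y = q * f (Suc y) + q * Rq q (\<lambda>j. f (Suc j)) y"
proof -
  let ?s = "\<lambda>m. q ^ (m + 1) * f (y + m + 1)"
  have s: "summable ?s" by (rule Rq_summable[OF assms])
  have t: "summable (\<lambda>m. q ^ (m + 1) * f (Suc (y + m + 1)))"
    using Rq_summable[of q "\<lambda>j. f (Suc j)" B y] assms by auto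
  have "(\<Sum>m. ?s (Suc m)) = suminf ?s - ?s 0" by (rule suminf_split_head[OF s])
  moreover have "(\<lambda>m. ?s (Suc m)) = (\<lambda>m. q * (q ^ (m + 1) * f (Suc (y + m + 1))))"
    by (auto simp: fun_eq_iff)
  moreover have "(\<Sum>m. q * (q ^ (m + 1) * f (Suc (y + m + 1)))) = q * (\<Sum>m. q ^ (m + 1) * f (Suc (y + m + 1)))"
    by (rule suminf_mult[OF t])
  ultimately show ?thesis unfolding Rq_def by simp
qed


lemma geom_shift:
  fixes g :: "nat \<Rightarrow> real"
  assumes p: "0 < p" "p \<le> 1"
    and i1: "integrable (geometric_pmf p) g" and i2: "integrable (geometric_pmf p) (\<lambda>y. g (Suc y))"
  shows "measure_pmf.expectation (geometric_pmf p) g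
       = p * g 0 + (1 - p) * measure_pmf.expectation (geometric_pmf p) (\<lambda>y. g (Suc y))"
proof -
  let ?P = "pmf (geometric_pmf p)"
  let ?E2 = "measure_pmf.expectation (geometric_pmf p) (\<lambda>y. g (Suc y))"
  have key: "?P (Suc n) * g (Suc n) = (1 - p) * (?P n * g (Suc n))" for n
    using p by simp
  have "(\<lambda>n. (1 - p) * (?P n * g (Suc n))) sums ((1 - p) * ?E2)"
    by (intro sums_mult pmf_integral_sums[OF i2])
  hence "(\<lambda>n. ?P (Suc n) * g (Suc n)) sums ((1 - p) * ?E2)" unfolding key .
  hence "(\<lambda>n. ?P n * g n) sums ((1 - p) * ?E2 + ?P 0 * g 0)"
    by (subst (asm) sums_Suc_iff)
  moreover have "(\<lambda>n. ?P n * g n) sums measure_pmf.expectation (geometric_pmf p) g"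
    by (rule pmf_integral_sums[OF i1])
  ultimately have "measure_pmf.expectation (geometric_pmf p) g = (1 - p) * ?E2 + ?P 0 * g 0"
    by (rule sums_unique2[symmetric])
  moreover have "?P 0 = p" using p by simp
  ultimately show ?thesis by simp
qed

lemma geom_real_int: "0 < p \<Longrightarrow> p \<le> 1 \<Longrightarrow> integrable (geometric_pmf p) real"
  by (rule integrable_real_geometric_pmf) auto

definition phi :: "real \<Rightarrow> (nat \<Rightarrow> real) \<Rightarrow> real" where
  "phi p f = measure_pmf.expectation (geometric_pmf p) (\<lambda>y. real y * f y)
           - measure_pmf.expectation (geometric_pmf p) (Rq (1 - p) f)"

lemma geom_ints:
  assumes p: "0 < p" "p \<le> 1" and fb: "\<And>j. \<bar>f j\<bar> \<le> B"
  shows "integrable (geometric_pmf p) (\<lambda>y. real y * f y)"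
    and "integrable (geometric_pmf p) (Rq (1 - p) f)"
    and "integrable (geometric_pmf p) (\<lambda>y. f (Suc y))"
proof -
  have B: "0 \<le> B" using fb[of 0] by linarith
  show "integrable (geometric_pmf p) (\<lambda>y. real y * f y)"
    by (rule lin_integrable[OF geom_real_int[OF p], where C=B and D=0])
       (use fb in \<open>auto intro: abs_mult_bound\<close>)
  show "integrable (geometric_pmf p) (Rq (1 - p) f)"
    by (rule bounded_integrable[where C="B * ((1 - p) / (1 - (1 - p)))"])
       (rule Rq_bound, use p fb in auto)
  show "integrable (geometric_pmf p) (\<lambda>y. f (Suc y))"
    by (rule bounded_integrable[where C=B]) (use fb in auto)
qed

lemma phi_rec:
  assumes p: "0 < p" "p \<le> 1" and fb: "\<And>j. \<bar>f j\<bar> \<le> B"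
  shows "phi p f = (1 - p) * phi p (\<lambda>j. f (Suc j))"
proof -
  let ?E = "measure_pmf.expectation (geometric_pmf p)"
  let ?G = "geometric_pmf p"
  have fb': "\<And>j. \<bar>f (Suc j)\<bar> \<le> B" using fb by auto
  note I = geom_ints[OF p fb] and I' = geom_ints[OF p fb']
  have iS: "integrable ?G (\<lambda>y. real (Suc y) * f (Suc y))"
  proof -
    have "integrable ?G (\<lambda>y. real y * f (Suc y) + f (Suc y))"
      using I'(1) I(3) by (rule Bochner_Integration.integrable_add)
    moreover have "(\<lambda>y. real y * f (Suc y) + f (Suc y)) = (\<lambda>y. real (Suc y) * f (Suc y))"
      by (auto simp: fun_eq_iff algebra_simps)
    ultimately show ?thesis by simp
  qed
  have e1: "?E (\<lambda>y. real y * f y) = (1 - p) * ?E (\<lambda>y. real (Suc y) * f (Suc y))"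
    using geom_shift[OF p I(1) iS] by (simp only: of_nat_0 mult_zero_left add_0_right mult_zero_right)
  have e2: "?E (\<lambda>y. real (Suc y) * f (Suc y)) = ?E (\<lambda>y. real y * f (Suc y)) + ?E (\<lambda>y. f (Suc y))"
  proof -
    have "(\<lambda>y. real y * f (Suc y) + f (Suc y)) = (\<lambda>y. real (Suc y) * f (Suc y))"
      by (auto simp: fun_eq_iff algebra_simps)
    hence "?E (\<lambda>y. real (Suc y) * f (Suc y)) = ?E (\<lambda>y. real y * f (Suc y) + f (Suc y))"
      by simp
    also have "\<dots> = ?E (\<lambda>y. real y * f (Suc y)) + ?E (\<lambda>y. f (Suc y))"
      using I'(1) I(3) by (rule Bochner_Integration.integral_add)
    finally show ?thesis .
  qed
  have q: "0 \<le> 1 - p" "1 - p < 1" using p by auto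
  have e3: "?E (Rq (1 - p) f) = (1 - p) * ?E (\<lambda>y. f (Suc y)) + (1 - p) * ?E (Rq (1 - p) (\<lambda>j. f (Suc j)))"
  proof -
    have "?E (Rq (1 - p) f) = ?E (\<lambda>y. (1 - p) * f (Suc y) + (1 - p) * Rq (1 - p) (\<lambda>j. f (Suc j)) y)"
      by (rule arg_cong[where f="?E"]) (rule ext, rule Rq_rec[OF q fb])
    also have "\<dots> = ?E (\<lambda>y. (1 - p) * f (Suc y)) + ?E (\<lambda>y. (1 - p) * Rq (1 - p) (\<lambda>j. f (Suc j)) y)"
      using I(3) I'(2) by (intro Bochner_Integration.integral_add integrable_mult_right) auto
    also have "\<dots> = (1 - p) * ?E (\<lambda>y. f (Suc y)) + (1 - p) * ?E (Rq (1 - p) (\<lambda>j. f (Suc j)))"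
      by (simp only: integral_mult_right_zero)
    finally show ?thesis .
  qed
  have "phi p f = (1 - p) * (?E (\<lambda>y. real y * f (Suc y)) + ?E (\<lambda>y. f (Suc y)))
     - ((1 - p) * ?E (\<lambda>y. f (Suc y)) + (1 - p) * ?E (Rq (1 - p) (\<lambda>j. f (Suc j))))"
    unfolding phi_def e1 e2 e3 by (rule refl)
  also have "\<dots> = (1 - p) * (?E (\<lambda>y. real y * f (Suc y)) - ?E (Rq (1 - p) (\<lambda>j. f (Suc j))))"
    by (simp only: algebra_simps)
  also have "\<dots> = (1 - p) * phi p (\<lambda>j. f (Suc j))" unfolding phi_def by (rule refl)
  finally show ?thesis .
qed


lemma phi_iter:
  assumes p: "0 < p" "p \<le> 1" and fb: "\<And>j. \<bar>f j\<bar> \<le> B"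
  shows "phi p f = (1 - p) ^ n * phi p (\<lambda>j. f (j + n))"
proof (induction n)
  case 0 then show ?case by simp
next
  case (Suc n)
  have "phi p (\<lambda>j. f (j + n)) = (1 - p) * phi p (\<lambda>j. f (Suc j + n))"
    by (rule phi_rec[OF p, where B=B]) (use fb in auto)
  moreover have "(\<lambda>j. f (Suc j + n)) = (\<lambda>j. f (j + Suc n))" by simp
  ultimately show ?case using Suc by simp
qed

lemma phi_bound:
  assumes p: "0 < p" "p \<le> 1" and fb: "\<And>j. \<bar>f j\<bar> \<le> B"
  shows "\<bar>phi p f\<bar> \<le> B * measure_pmf.expectation (geometric_pmf p) real + B * ((1 - p) / (1 - (1 - p)))"
proof -
  let ?E = "measure_pmf.expectation (geometric_pmf p)"
  let ?G = "geometric_pmf p"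
  note I = geom_ints[OF p fb]
  have q: "0 \<le> 1 - p" "1 - p < 1" using p by auto
  have "\<bar>?E (\<lambda>y. real y * f y)\<bar> \<le> ?E (\<lambda>y. \<bar>real y * f y\<bar>)"
    using integral_norm_bound[of ?G "\<lambda>y. real y * f y"] by simp
  also have "\<dots> \<le> ?E (\<lambda>y. B * real y)"
    using I(1) geom_real_int[OF p] fb
    by (intro integral_mono) (auto intro: abs_mult_bound)
  also have "\<dots> = B * ?E real" by simp
  finally have a: "\<bar>?E (\<lambda>y. real y * f y)\<bar> \<le> B * ?E real" .
  have "\<bar>?E (Rq (1 - p) f)\<bar> \<le> ?E (\<lambda>y. \<bar>Rq (1 - p) f y\<bar>)"
    using integral_norm_bound[of ?G "Rq (1 - p) f"] by simp
  also have "\<dots> \<le> ?E (\<lambda>y. B * ((1 - p) / (1 - (1 - p))))"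
    using I(2) Rq_bound[OF q fb]
    by (intro integral_mono) auto
  also have "\<dots> = B * ((1 - p) / (1 - (1 - p)))" by simp
  finally have b: "\<bar>?E (Rq (1 - p) f)\<bar> \<le> B * ((1 - p) / (1 - (1 - p)))" .
  show ?thesis unfolding phi_def using a b by linarith
qed

lemma phi_zero:
  assumes p: "0 < p" "p \<le> 1" and fb: "\<And>j. \<bar>f j\<bar> \<le> B"
  shows "phi p f = 0"
proof -
  define K where "K = B * measure_pmf.expectation (geometric_pmf p) real + B * ((1 - p) / (1 - (1 - p)))"
  have le: "\<bar>phi p f\<bar> \<le> (1 - p) ^ n * K" for n
  proof -
    have e: "phi p f = (1 - p) ^ n * phi p (\<lambda>j. f (j + n))" by (rule phi_iter[OF p fb])
    have "\<bar>(1 - p) ^ n\<bar> = (1 - p) ^ n" using p by simp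
    hence "\<bar>phi p f\<bar> = (1 - p) ^ n * \<bar>phi p (\<lambda>j. f (j + n))\<bar>"
      by (simp only: e abs_mult)
    also have "\<dots> \<le> (1 - p) ^ n * K"
      unfolding K_def using p fb by (intro mult_left_mono phi_bound) auto
    finally show ?thesis .
  qed
  have "(\<lambda>n. (1 - p) ^ n * K) \<longlonglongrightarrow> 0 * K"
    by (intro tendsto_mult LIMSEQ_power_zero tendsto_const) (use p in auto)
  hence "\<bar>phi p f\<bar> \<le> 0"
    using le by (intro LIMSEQ_le_const[where a="\<bar>phi p f\<bar>"]) auto
  thus ?thesis by simp
qed

lemma geom_stein:
  assumes p: "0 < p" "p \<le> 1" and fb: "\<And>j. \<bar>f j\<bar> \<le> B"
  shows "measure_pmf.expectation (geometric_pmf p) (\<lambda>y. real y * f y)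
       = measure_pmf.expectation (geometric_pmf p) (Rq (1 - p) f)"
  using phi_zero[OF p fb] unfolding phi_def by simp


lemma telescope_fdiff:
  "(\<Sum>l = 1..k. fdiff h (j + l)) = h (j + k + 1) - h (j + 1)"
  by (induction k) (auto simp: fdiff_def sum.cl_ivl_Suc)

lemma stein_rewrite:
  assumes p: "0 < p" "p \<le> 1" and fb: "\<And>j. \<bar>h j\<bar> \<le> B"
  shows "stein_PoGe lam p h j = lam * h (Suc j) - real j * h j + Rq (1 - p) h j"
proof -
  have q: "0 \<le> 1 - p" "1 - p < 1" using p by auto
  have inner: "(\<Sum>l = 1..k. (1 - p) ^ (k + 1) * fdiff h (j + l))
      = (1 - p) ^ (k + 1) * h (j + k + 1) - h (j + 1) * (1 - p) ^ (k + 1)" for k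
  proof -
    have "(\<Sum>l = 1..k. (1 - p) ^ (k + 1) * fdiff h (j + l)) = (1 - p) ^ (k + 1) * (\<Sum>l = 1..k. fdiff h (j + l))"
      by (rule sum_distrib_left[symmetric])
    also have "\<dots> = (1 - p) ^ (k + 1) * (h (j + k + 1) - h (j + 1))" by (simp only: telescope_fdiff)
    finally show ?thesis by (simp only: algebra_simps)
  qed
  have s1: "summable (\<lambda>k. (1 - p) ^ (k + 1) * h (j + k + 1))" by (rule Rq_summable[OF q fb])
  have s2: "(\<lambda>k. h (j + 1) * (1 - p) ^ (k + 1)) sums (h (j + 1) * ((1 - p) / (1 - (1 - p))))"
    by (intro sums_mult geom_q_sums q)
  have "(\<Sum>k. \<Sum>l = 1..k. (1 - p) ^ (k + 1) * fdiff h (j + l))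
      = (\<Sum>k. (1 - p) ^ (k + 1) * h (j + k + 1) - h (j + 1) * (1 - p) ^ (k + 1))"
    by (simp only: inner)
  also have "\<dots> = Rq (1 - p) h j - h (j + 1) * ((1 - p) / (1 - (1 - p)))"
    unfolding Rq_def using suminf_diff[OF s1 sums_summable[OF s2]] sums_unique[OF s2] by simp
  finally have "(\<Sum>k. \<Sum>l = 1..k. (1 - p) ^ (k + 1) * fdiff h (j + l))
      = Rq (1 - p) h j - h (j + 1) * ((1 - p) / p)" by simp
  thus ?thesis unfolding stein_PoGe_def by (simp add: algebra_simps)
qed

lemma integrable_pair_fst:
  fixes g :: "'a \<Rightarrow> real"
  assumes "integrable (measure_pmf A) g"
  shows "integrable (measure_pmf (pair_pmf A B)) (\<lambda>z. g (fst z))"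
proof -
  have "integrable (map_pmf fst (pair_pmf A B)) g" by (simp add: map_fst_pair_pmf assms)
  thus ?thesis by (simp only: integrable_map_pmf_eq)
qed

lemma integrable_pair_snd:
  fixes g :: "'b \<Rightarrow> real"
  assumes "integrable (measure_pmf B) g"
  shows "integrable (measure_pmf (pair_pmf A B)) (\<lambda>z. g (snd z))"
proof -
  have "integrable (map_pmf snd (pair_pmf A B)) g" by (simp add: map_snd_pair_pmf assms)
  thus ?thesis by (simp only: integrable_map_pmf_eq)
qed


theorem proposition3p2:
  fixes lam p :: real and h :: "nat \<Rightarrow> real"
  assumes "0 < lam" and "0 < p" and "p \<le> 1"
    and "h \<in> H_of (law_PoGe lam p)"
  shows "integrable (measure_pmf (law_PoGe lam p)) (stein_PoGe lam p h)
       \<and> measure_pmf.expectation (law_PoGe lam p) (stein_PoGe lam p h) = 0"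
proof -
  have lam: "0 < lam" and p: "0 < p" "p \<le> 1" using assms by auto
  obtain B where fb: "\<And>j. \<bar>h j\<bar> \<le> B"
    using assms(4) unfolding H_of_def bounded_fun_def by auto
  have B: "0 \<le> B" using fb[of 0] by linarith
  have q: "0 \<le> 1 - p" "1 - p < 1" using p by auto
  define M1 where "M1 = measure_pmf (poisson_pmf lam)"
  define M2 where "M2 = measure_pmf (geometric_pmf p)"
  define P where "P = pair_pmf (poisson_pmf lam) (geometric_pmf p)"
  have PM: "measure_pmf P = M1 \<Otimes>\<^sub>M M2"
    unfolding P_def M1_def M2_def by (rule pair_pmf_eq_pair_measure)
  interpret PS: pair_sigma_finite M1 M2
    unfolding M1_def M2_def
    by (intro pair_sigma_finite.intro prob_space_imp_sigma_finite measure_pmf.prob_space_axioms)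
  define T1 where "T1 = (\<lambda>(x::nat, y::nat). lam * h (Suc (x + y)))"
  define T2 where "T2 = (\<lambda>(x::nat, y::nat). real x * h (x + y))"
  define T3 where "T3 = (\<lambda>(x::nat, y::nat). real y * h (x + y))"
  define T4 where "T4 = (\<lambda>(x::nat, y::nat). Rq (1 - p) h (x + y))"
  have decomp: "(\<lambda>z. stein_PoGe lam p h (case z of (x, y) \<Rightarrow> x + y)) = (\<lambda>z. T1 z - T2 z - T3 z + T4 z)"
    by (auto simp: fun_eq_iff T1_def T2_def T3_def T4_def stein_rewrite[OF p fb] algebra_simps)
  have ipoi: "integrable (poisson_pmf lam) real"
    using poisson_stein(1)[OF lam, of "\<lambda>_. 1" 1] by simp
  have i1: "integrable P T1"
    by (rule bounded_integrable[where C="lam * B"])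
       (use lam fb in \<open>auto simp: T1_def abs_mult intro: mult_left_mono\<close>)
  have i4: "integrable P T4"
    by (rule bounded_integrable[where C="B * ((1 - p) / (1 - (1 - p)))"])
       (simp only: T4_def case_prod_beta Rq_bound[OF q fb])
  have i2: "integrable P T2"
  proof (rule Bochner_Integration.integrable_bound)
    show "integrable P (\<lambda>z. B * real (fst z))"
      unfolding P_def by (intro integrable_pair_fst integrable_mult_right ipoi)
    show "AE z in P. norm (T2 z) \<le> norm (B * real (fst z))"
    proof (rule AE_I2)
      fix z :: "nat \<times> nat"
      obtain x y where z: "z = (x, y)" by (cases z)
      have "\<bar>real x * h (x + y)\<bar> \<le> B * real x" by (rule abs_mult_bound) (use fb in auto)
      thus "norm (T2 z) \<le> norm (B * real (fst z))" using B by (simp add: T2_def z)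
    qed
  qed simp
  have i3: "integrable P T3"
  proof (rule Bochner_Integration.integrable_bound)
    show "integrable P (\<lambda>z. B * real (snd z))"
      unfolding P_def by (intro integrable_pair_snd integrable_mult_right geom_real_int p)
    show "AE z in P. norm (T3 z) \<le> norm (B * real (snd z))"
    proof (rule AE_I2)
      fix z :: "nat \<times> nat"
      obtain x y where z: "z = (x, y)" by (cases z)
      have "\<bar>real y * h (x + y)\<bar> \<le> B * real y" by (rule abs_mult_bound) (use fb in auto)
      thus "norm (T3 z) \<le> norm (B * real (snd z))" using B by (simp add: T3_def z)
    qed
  qed simp
  have iS: "integrable P (\<lambda>z. T1 z - T2 z - T3 z + T4 z)"
    using i1 i2 i3 i4 by (intro Bochner_Integration.integrable_add Bochner_Integration.integrable_diff)
  have E12: "integral\<^sup>L P T2 = integral\<^sup>L P T1"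
  proof -
    have j2: "integrable (M1 \<Otimes>\<^sub>M M2) (case_prod (\<lambda>x y. real x * h (x + y)))"
      using i2 unfolding PM T2_def .
    have j1: "integrable (M1 \<Otimes>\<^sub>M M2) (case_prod (\<lambda>x y. lam * h (Suc (x + y))))"
      using i1 unfolding PM T1_def .
    have "integral\<^sup>L P T2 = (\<integral>y. (\<integral>x. real x * h (x + y) \<partial>M1) \<partial>M2)"
      unfolding PM T2_def using PS.integral_snd[OF j2] by simp
    also have "\<dots> = (\<integral>y. (\<integral>x. lam * h (Suc (x + y)) \<partial>M1) \<partial>M2)"
    proof (rule Bochner_Integration.integral_cong[OF refl])
      fix y
      have "(\<integral>x. real x * h (x + y) \<partial>M1) = lam * (\<integral>x. h (Suc x + y) \<partial>M1)"
        unfolding M1_def by (rule poisson_stein(2)[OF lam, of "\<lambda>x. h (x + y)" B]) (use fb in auto)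
      thus "(\<integral>x. real x * h (x + y) \<partial>M1) = (\<integral>x. lam * h (Suc (x + y)) \<partial>M1)" by simp
    qed
    also have "\<dots> = integral\<^sup>L P T1"
      unfolding PM T1_def using PS.integral_snd[OF j1] by simp
    finally show ?thesis .
  qed
  have E34: "integral\<^sup>L P T3 = integral\<^sup>L P T4"
  proof -
    have j3: "integrable (M1 \<Otimes>\<^sub>M M2) (case_prod (\<lambda>x y. real y * h (x + y)))"
      using i3 unfolding PM T3_def .
    have j4: "integrable (M1 \<Otimes>\<^sub>M M2) (case_prod (\<lambda>x y. Rq (1 - p) h (x + y)))"
      using i4 unfolding PM T4_def .
    have "integral\<^sup>L P T3 = (\<integral>x. (\<integral>y. real y * h (x + y) \<partial>M2) \<partial>M1)"
      unfolding PM T3_def using PS.integral_fst[OF j3] by simp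
    also have "\<dots> = (\<integral>x. (\<integral>y. Rq (1 - p) h (x + y) \<partial>M2) \<partial>M1)"
    proof (rule Bochner_Integration.integral_cong[OF refl])
      fix x
      have "(\<integral>y. real y * h (x + y) \<partial>M2) = (\<integral>y. Rq (1 - p) (\<lambda>j. h (x + j)) y \<partial>M2)"
        unfolding M2_def by (rule geom_stein[OF p, of "\<lambda>j. h (x + j)" B]) (use fb in auto)
      moreover have "Rq (1 - p) (\<lambda>j. h (x + j)) = (\<lambda>y. Rq (1 - p) h (x + y))"
        by (auto simp: fun_eq_iff Rq_def add.assoc)
      ultimately show "(\<integral>y. real y * h (x + y) \<partial>M2) = (\<integral>y. Rq (1 - p) h (x + y) \<partial>M2)" by simp
    qed
    also have "\<dots> = integral\<^sup>L P T4"
      unfolding PM T4_def using PS.integral_fst[OF j4] by simp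
    finally show ?thesis .
  qed
  have "integral\<^sup>L P (\<lambda>z. T1 z - T2 z - T3 z + T4 z)
      = integral\<^sup>L P T1 - integral\<^sup>L P T2 - integral\<^sup>L P T3 + integral\<^sup>L P T4"
    using i1 i2 i3 i4
    by (simp add: Bochner_Integration.integral_add Bochner_Integration.integral_diff
                  Bochner_Integration.integrable_diff)
  also have "\<dots> = 0" using E12 E34 by simp
  finally have E0: "integral\<^sup>L P (\<lambda>z. T1 z - T2 z - T3 z + T4 z) = 0" .
  have lawP: "law_PoGe lam p = map_pmf (\<lambda>(x, y). x + y) P"
    unfolding law_PoGe_def P_def ..
  show ?thesis
    unfolding lawP integrable_map_pmf_eq integral_map_pmf decomp
    using iS E0 by simp
qed

end
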